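(* Let $G$ be a finite, simple, connected graph which is not a tree. Then $G$ contains a cycle which is $W(G)/3$-supported.
   Context: For a vertex $r$ of $G$ (the root) and $x\in V(G)$, let $\ell_r(x)=d_G(r,x)$ (the level of $x$). For an integer $n\ge 0$, let $R_r(n)$ be the set of edges $xy\in E(G)$ with $\max\{\ell_r(x),\ell_r(y)\}>n$, and write $x\simeq_n y$ if $x$ and $y$ lie in the same connected component of the graph $(V(G),R_r(n))$ (in particular $x\simeq_n x$). Define $W(r)=\max_{n\ge 0}\max\{d_G(x,y): \ell_r(x)=\ell_r(y)=n,\ x\simeq_n y\}$ and the cycle width $W(G)=\max_{r\in V(G)}W(r)$. A cycle $C$ in $G$ is called $k$-supported (for a real number $k$) if $C$ can be partitioned into three edge-disjoint paths $I_1,I_2,I_3$, with $I_1\cap I_2$, $I_2\cap I_3$ and $I_3\cap I_1$ each consisting of exactly one vertex, such that for every triple of vertices $(u_1,u_2,u_3)$ with $u_i\in V(I_i)$ we have $\max_{i,j\in\{1,2,3\}} d_G(u_i,u_j)\ge k$. *)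

theory Defs
  imports Main "HOL.Real"
begin

definition simple_graph :: "'a set \<Rightarrow> ('a \<Rightarrow> 'a \<Rightarrow> bool) \<Rightarrow> bool" where
  "simple_graph V E \<longleftrightarrow> finite V \<and> (\<forall>x y. E x y \<longrightarrow> x \<in> V \<and> y \<in> V)
     \<and> (\<forall>x y. E x y \<longrightarrow> E y x) \<and> (\<forall>x. \<not> E x x)"

definition connected_graph :: "'a set \<Rightarrow> ('a \<Rightarrow> 'a \<Rightarrow> bool) \<Rightarrow> bool" where
  "connected_graph V E \<longleftrightarrow> V \<noteq> {} \<and> (\<forall>x\<in>V. \<forall>y\<in>V. E\<^sup>*\<^sup>* x y)"

definition gdist :: "('a \<Rightarrow> 'a \<Rightarrow> bool) \<Rightarrow> 'a \<Rightarrow> 'a \<Rightarrow> nat" where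
  "gdist E x y = (LEAST n. (E ^^ n) x y)"

definition is_path :: "'a set \<Rightarrow> ('a \<Rightarrow> 'a \<Rightarrow> bool) \<Rightarrow> 'a list \<Rightarrow> bool" where
  "is_path V E p \<longleftrightarrow> p \<noteq> [] \<and> distinct p \<and> set p \<subseteq> V
     \<and> (\<forall>i. Suc i < length p \<longrightarrow> E (p ! i) (p ! Suc i))"

definition path_edges :: "'a list \<Rightarrow> 'a set set" where
  "path_edges p = {{p ! i, p ! Suc i} | i. Suc i < length p}"

definition is_cycle :: "'a set \<Rightarrow> ('a \<Rightarrow> 'a \<Rightarrow> bool) \<Rightarrow> 'a list \<Rightarrow> bool" where
  "is_cycle V E c \<longleftrightarrow> length c \<ge> 3 \<and> is_path V E c \<and> E (last c) (hd c)"

definition cycle_edges :: "'a list \<Rightarrow> 'a set set" where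
  "cycle_edges c = path_edges c \<union> {{last c, hd c}}"

definition is_tree :: "'a set \<Rightarrow> ('a \<Rightarrow> 'a \<Rightarrow> bool) \<Rightarrow> bool" where
  "is_tree V E \<longleftrightarrow> connected_graph V E \<and> \<not> (\<exists>c. is_cycle V E c)"

definition level :: "('a \<Rightarrow> 'a \<Rightarrow> bool) \<Rightarrow> 'a \<Rightarrow> 'a \<Rightarrow> nat" where
  "level E r x = gdist E r x"

definition R_edge :: "('a \<Rightarrow> 'a \<Rightarrow> bool) \<Rightarrow> 'a \<Rightarrow> nat \<Rightarrow> 'a \<Rightarrow> 'a \<Rightarrow> bool" where
  "R_edge E r n x y \<longleftrightarrow> E x y \<and> max (level E r x) (level E r y) > n"

definition same_comp :: "('a \<Rightarrow> 'a \<Rightarrow> bool) \<Rightarrow> 'a \<Rightarrow> nat \<Rightarrow> 'a \<Rightarrow> 'a \<Rightarrow> bool" where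
  "same_comp E r n x y \<longleftrightarrow> (R_edge E r n)\<^sup>*\<^sup>* x y"

definition W_root :: "'a set \<Rightarrow> ('a \<Rightarrow> 'a \<Rightarrow> bool) \<Rightarrow> 'a \<Rightarrow> nat" where
  "W_root V E r = Max {gdist E x y | n x y. x \<in> V \<and> y \<in> V
       \<and> level E r x = n \<and> level E r y = n \<and> same_comp E r n x y}"

definition cycle_width :: "'a set \<Rightarrow> ('a \<Rightarrow> 'a \<Rightarrow> bool) \<Rightarrow> nat" where
  "cycle_width V E = Max (W_root V E ` V)"

definition k_supported :: "'a set \<Rightarrow> ('a \<Rightarrow> 'a \<Rightarrow> bool) \<Rightarrow> real \<Rightarrow> 'a list \<Rightarrow> bool" where
  "k_supported V E k c \<longleftrightarrow> (\<exists>I1 I2 I3.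
      is_path V E I1 \<and> is_path V E I2 \<and> is_path V E I3
    \<and> set I1 \<subseteq> set c \<and> set I2 \<subseteq> set c \<and> set I3 \<subseteq> set c
    \<and> path_edges I1 \<union> path_edges I2 \<union> path_edges I3 = cycle_edges c
    \<and> path_edges I1 \<inter> path_edges I2 = {} \<and> path_edges I2 \<inter> path_edges I3 = {}
    \<and> path_edges I3 \<inter> path_edges I1 = {}
    \<and> card (set I1 \<inter> set I2) = 1 \<and> card (set I2 \<inter> set I3) = 1
    \<and> card (set I3 \<inter> set I1) = 1
    \<and> (\<forall>u1\<in>set I1. \<forall>u2\<in>set I2. \<forall>u3\<in>set I3.
         real (Max {gdist E u1 u2, gdist E u2 u3, gdist E u1 u3}) \<ge> k))"

end

theory Submission
  imports Defs
begin


fun walk :: "('a \<Rightarrow> 'a \<Rightarrow> bool) \<Rightarrow> 'a list \<Rightarrow> bool" where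
  "walk R [] = True" | "walk R [x] = True" | "walk R (x#y#zs) = (R x y \<and> walk R (y#zs))"

lemma walk_iff: "walk R p \<longleftrightarrow> (\<forall>i. Suc i < length p \<longrightarrow> R (p!i) (p!Suc i))"
proof (induction R p rule: walk.induct)
  case (3 R x y zs)
  show ?case
  proof
    assume "walk R (x#y#zs)"
    then show "\<forall>i. Suc i < length (x#y#zs) \<longrightarrow> R ((x#y#zs)!i) ((x#y#zs)!Suc i)"
      using 3 by (auto simp: nth_Cons split: nat.splits)
  next
    assume h: "\<forall>i. Suc i < length (x#y#zs) \<longrightarrow> R ((x#y#zs)!i) ((x#y#zs)!Suc i)"
    have "R x y" using h[rule_format, of 0] by simp
    moreover have "\<forall>i. Suc i < length (y#zs) \<longrightarrow> R ((y#zs)!i) ((y#zs)!Suc i)"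
      using h[rule_format, of "Suc _"] by auto
    ultimately show "walk R (x#y#zs)" using 3 by simp
  qed
qed auto

lemma is_path_walk: "is_path V E p \<longleftrightarrow> p \<noteq> [] \<and> distinct p \<and> set p \<subseteq> V \<and> walk E p"
  unfolding is_path_def walk_iff by auto

lemma walk_app: "walk R (xs @ y # ys) \<longleftrightarrow> walk R (xs @ [y]) \<and> walk R (y # ys)"
proof (induction xs)
  case (Cons a xs) then show ?case by (cases xs) auto
qed auto

lemma walk_glue: "xs \<noteq> [] \<Longrightarrow> ys \<noteq> [] \<Longrightarrow> last xs = hd ys \<Longrightarrow>
  walk R (xs @ tl ys) \<longleftrightarrow> walk R xs \<and> walk R ys"
proof -
  assume a: "xs \<noteq> []" "ys \<noteq> []" "last xs = hd ys"
  then have "xs @ tl ys = butlast xs @ hd ys # tl ys" "xs = butlast xs @ [hd ys]" "ys = hd ys # tl ys"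
    by (metis append_butlast_last_id append_assoc append_Cons self_append_conv2 list.collapse)+
  then show ?thesis using walk_app by metis
qed

lemma walk_rev: "(\<And>x y. R x y \<Longrightarrow> R y x) \<Longrightarrow> walk R (rev xs) = walk R xs"
proof (induction R xs rule: walk.induct)
  case (3 R x y zs)
  have "walk R (rev (x#y#zs)) = walk R (rev zs @ y # [x])" by simp
  also have "\<dots> = (walk R (rev (y#zs)) \<and> R y x)" by (subst walk_app) simp
  finally show ?case using 3 by auto
qed auto

lemma walk_prefix: "walk R (xs @ ys) \<Longrightarrow> walk R xs"
  by (induction R xs rule: walk.induct) (auto simp: neq_Nil_conv)

lemma walk_last: "walk R (xs @ [z]) \<Longrightarrow> xs \<noteq> [] \<Longrightarrow> R (last xs) z"
proof -
  assume "walk R (xs @ [z])" "xs \<noteq> []"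
  then have "walk R (butlast xs @ last xs # [z])" by (metis append_butlast_last_id append_assoc append_Cons append_Nil)
  then have "walk R [last xs, z]" using walk_app by metis
  then show ?thesis by simp
qed

lemma walk_mono: "walk R xs \<Longrightarrow> (\<And>x y. R x y \<Longrightarrow> S x y) \<Longrightarrow> walk S xs"
  by (induction R xs rule: walk.induct) auto

lemma walk_inv: "walk R xs \<Longrightarrow> xs \<noteq> [] \<Longrightarrow> P (hd xs) \<Longrightarrow> (\<And>x y. R x y \<Longrightarrow> P y) \<Longrightarrow> z \<in> set xs \<Longrightarrow> P z"
  by (induction R xs rule: walk.induct) auto

lemma path_edges_Nil[simp]: "path_edges [] = {}" by (simp add: path_edges_def)
lemma path_edges_single[simp]: "path_edges [x] = {}" by (simp add: path_edges_def)
lemma path_edges_Cons2[simp]: "path_edges (x#y#zs) = insert {x,y} (path_edges (y#zs))"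
proof -
  have "path_edges (x#y#zs) = {{(x#y#zs)!i, (x#y#zs)!Suc i} | i. Suc i < length (x#y#zs)}"
    by (simp add: path_edges_def)
  also have "\<dots> = insert {x,y} {{(y#zs)!i, (y#zs)!Suc i} | i. Suc i < length (y#zs)}"
  proof (rule set_eqI, rule iffI)
    fix e assume "e \<in> {{(x#y#zs)!i, (x#y#zs)!Suc i} | i. Suc i < length (x#y#zs)}"
    then obtain i where i: "e = {(x#y#zs)!i, (x#y#zs)!Suc i}" "Suc i < length (x#y#zs)" by blast
    show "e \<in> insert {x,y} {{(y#zs)!i, (y#zs)!Suc i} | i. Suc i < length (y#zs)}"
    proof (cases i)
      case 0 then show ?thesis using i by simp
    next
      case (Suc j) then show ?thesis using i by auto
    qed
  next
    fix e assume "e \<in> insert {x,y} {{(y#zs)!i, (y#zs)!Suc i} | i. Suc i < length (y#zs)}"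
    then show "e \<in> {{(x#y#zs)!i, (x#y#zs)!Suc i} | i. Suc i < length (x#y#zs)}"
    proof
      assume "e = {x,y}" then show ?thesis by (intro CollectI exI[of _ 0]) auto
    next
      assume "e \<in> {{(y#zs)!i, (y#zs)!Suc i} | i. Suc i < length (y#zs)}"
      then obtain i where i: "e = {(y#zs)!i, (y#zs)!Suc i}" "Suc i < length (y#zs)" by blast
      then show ?thesis by (intro CollectI exI[of _ "Suc i"]) auto
    qed
  qed
  also have "\<dots> = insert {x,y} (path_edges (y#zs))" by (simp add: path_edges_def)
  finally show ?thesis .
qed

lemma pe_app: "path_edges (xs @ y # ys) = path_edges (xs @ [y]) \<union> path_edges (y # ys)"
proof (induction xs)
  case (Cons a xs) then show ?case by (cases xs) auto
qed auto

lemma pe_glue: "xs \<noteq> [] \<Longrightarrow> ys \<noteq> [] \<Longrightarrow> last xs = hd ys \<Longrightarrow>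
  path_edges (xs @ tl ys) = path_edges xs \<union> path_edges ys"
proof -
  assume a: "xs \<noteq> []" "ys \<noteq> []" "last xs = hd ys"
  then have "xs @ tl ys = butlast xs @ hd ys # tl ys" "xs = butlast xs @ [hd ys]" "ys = hd ys # tl ys"
    by (metis append_butlast_last_id append_assoc append_Cons self_append_conv2 list.collapse)+
  then show ?thesis using pe_app by metis
qed

lemma pe_rev: "path_edges (rev xs) = path_edges xs"
proof (induction xs rule: induct_list012)
  case (3 x y zs)
  have "path_edges (rev (x#y#zs)) = path_edges (rev zs @ y # [x])" by simp
  also have "\<dots> = path_edges (rev (y#zs)) \<union> {{y,x}}" by (subst pe_app) simp
  finally show ?case using 3 by (auto simp: insert_commute)
qed auto

lemma cycle_edges_alt: "c \<noteq> [] \<Longrightarrow> cycle_edges c = path_edges (c @ [hd c])"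
proof -
  assume "c \<noteq> []"
  then have "c @ [hd c] = butlast c @ last c # [hd c]" "c = butlast c @ [last c]"
    by (metis append_butlast_last_id append_assoc append_Cons append_Nil)+
  then show ?thesis unfolding cycle_edges_def using pe_app by (metis insert_is_Un path_edges_Cons2 path_edges_single sup_commute)
qed

lemma pe_elem: "e \<in> path_edges xs \<Longrightarrow> distinct xs \<Longrightarrow> \<exists>u v. e = {u,v} \<and> u \<in> set xs \<and> v \<in> set xs \<and> u \<noteq> v"
  unfolding path_edges_def
  by clarify (intro exI conjI, rule refl, auto simp: nth_eq_iff_index_eq)

lemma pe_disj: "distinct xs \<Longrightarrow> distinct ys \<Longrightarrow> card (set xs \<inter> set ys) = 1 \<Longrightarrow> path_edges xs \<inter> path_edges ys = {}"
proof (rule ccontr)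
  assume a: "distinct xs" "distinct ys" "card (set xs \<inter> set ys) = 1" "path_edges xs \<inter> path_edges ys \<noteq> {}"
  then obtain e where e: "e \<in> path_edges xs" "e \<in> path_edges ys" by blast
  obtain u v where uv: "e = {u,v}" "u \<in> set xs" "v \<in> set xs" "u \<noteq> v" using pe_elem[OF e(1) a(1)] by blast
  obtain u' v' where uv': "e = {u',v'}" "u' \<in> set ys" "v' \<in> set ys" using pe_elem[OF e(2) a(2)] by blast
  have "u \<in> set ys" "v \<in> set ys" using uv uv' by (auto simp: doubleton_eq_iff)
  then have "{u,v} \<subseteq> set xs \<inter> set ys" using uv by auto
  then have "card {u,v} \<le> 1" using a(3) by (metis card_mono finite_Int finite_set)
  then show False using uv(4) by simp
qed



lemma set_hd_tl: "xs \<noteq> [] \<Longrightarrow> set xs = insert (hd xs) (set (tl xs))"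
  by (metis list.collapse list.simps(15))

lemma hd_notin_tl: "xs \<noteq> [] \<Longrightarrow> distinct xs \<Longrightarrow> hd xs \<notin> set (tl xs)"
  by (metis distinct.simps(2) list.collapse)

lemma last_notin_butlast: "xs \<noteq> [] \<Longrightarrow> distinct xs \<Longrightarrow> last xs \<notin> set (butlast xs)"
  by (metis append_butlast_last_id distinct_append disjoint_iff list.set_intros(1))

lemma set_butlast_sub: "set (butlast xs) \<subseteq> set xs"
  by (meson in_set_butlastD subsetI)

lemma set_tl_sub: "set (tl xs) \<subseteq> set xs"
  by (cases xs) auto

lemma glue:
  assumes p1: "is_path V E I1" and p2: "is_path V E I2" and p3: "is_path V E I3"
    and l1: "length I1 \<ge> 2" and l2: "length I2 \<ge> 2" and l3: "length I3 \<ge> 2"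
    and e12: "last I1 = hd I2" and e23: "last I2 = hd I3" and e31: "last I3 = hd I1"
    and s12: "set I1 \<inter> set I2 = {hd I2}" and s23: "set I2 \<inter> set I3 = {hd I3}"
    and s31: "set I3 \<inter> set I1 = {hd I1}"
  shows "\<exists>c. is_cycle V E c \<and> set I1 \<subseteq> set c \<and> set I2 \<subseteq> set c \<and> set I3 \<subseteq> set c
     \<and> path_edges I1 \<union> path_edges I2 \<union> path_edges I3 = cycle_edges c"
proof -
  have ne: "I1 \<noteq> []" "I2 \<noteq> []" "I3 \<noteq> []" "tl I3 \<noteq> []" "tl I2 \<noteq> []"
    using l1 l2 l3 by (auto simp flip: length_greater_0_conv)
  have d: "distinct I1" "distinct I2" "distinct I3" "set I1 \<subseteq> V" "set I2 \<subseteq> V" "set I3 \<subseteq> V"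
    "walk E I1" "walk E I2" "walk E I3"
    using p1 p2 p3 by (auto simp: is_path_walk)
  define c where "c = I1 @ tl I2 @ butlast (tl I3)"
  define L where "L = I1 @ tl I2 @ tl I3"
  have hdc: "hd c = hd I1" using ne by (simp add: c_def)
  have "tl I3 = butlast (tl I3) @ [last I3]" using ne
    by (metis append_butlast_last_id last_tl)
  then have Lc: "L = c @ [hd c]" using hdc e31 by (simp add: L_def c_def)
  have w23: "walk E (I2 @ tl I3)" using walk_glue[OF ne(2) ne(3) e23] d by simp
  have "walk E (I1 @ tl (I2 @ tl I3))"
    using walk_glue[of I1 "I2 @ tl I3"] ne e12 w23 d by simp
  then have wL: "walk E L" using ne by (simp add: L_def)
  have pe23: "path_edges (I2 @ tl I3) = path_edges I2 \<union> path_edges I3" using pe_glue[OF ne(2) ne(3) e23] .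
  have "path_edges (I1 @ tl (I2 @ tl I3)) = path_edges I1 \<union> path_edges (I2 @ tl I3)"
    using pe_glue[of I1 "I2 @ tl I3"] ne e12 by simp
  then have peL: "path_edges L = path_edges I1 \<union> path_edges I2 \<union> path_edges I3"
    using ne pe23 by (simp add: L_def Un_assoc)
  have cne: "c \<noteq> []" using ne by (simp add: c_def)
  have ce: "cycle_edges c = path_edges L" using cycle_edges_alt[OF cne] Lc by simp
  have wc: "walk E c" using wL Lc walk_prefix by metis
  have elast: "E (last c) (hd c)" using wL Lc walk_last cne by metis
  have setL: "set L = set I1 \<union> set I2 \<union> set I3"
    using ne set_hd_tl[of I2] set_hd_tl[of I3] e12 e23 last_in_set[OF ne(1)] last_in_set[OF ne(5)] last_tl[of I2] ne(5)
    by (auto simp: L_def)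
  have setc: "set c = set L" using Lc hdc ne by (simp add: c_def) (metis hd_in_set Un_iff insert_absorb)
  have dtl2: "distinct (tl I2)" using d by (simp add: distinct_tl)
  have dbt3: "distinct (butlast (tl I3))" using d by (simp add: distinct_tl distinct_butlast)
  have x1: "set I1 \<inter> set (tl I2) = {}"
  proof (rule ccontr)
    assume "set I1 \<inter> set (tl I2) \<noteq> {}"
    then obtain x where "x \<in> set I1" "x \<in> set (tl I2)" by blast
    then have "x \<in> set I1 \<inter> set I2" using set_tl_sub[of I2] by blast
    then have "x = hd I2" using s12 by blast
    then show False using hd_notin_tl[OF ne(2) d(2)] \<open>x \<in> set (tl I2)\<close> by simp
  qed
  have x2: "set I1 \<inter> set (butlast (tl I3)) = {}"
  proof (rule ccontr)
    assume "set I1 \<inter> set (butlast (tl I3)) \<noteq> {}"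
    then obtain x where x: "x \<in> set I1" "x \<in> set (butlast (tl I3))" by blast
    have "set (butlast (tl I3)) \<subseteq> set (butlast I3)" by (simp add: butlast_tl set_tl_sub)
    then have xb: "x \<in> set (butlast I3)" using x by blast
    then have "x \<in> set I3 \<inter> set I1" using set_butlast_sub[of I3] x by blast
    then have "x = last I3" using s31 e31 by simp
    then show False using last_notin_butlast[OF ne(3) d(3)] xb by simp
  qed
  have x3: "set (tl I2) \<inter> set (butlast (tl I3)) = {}"
  proof (rule ccontr)
    assume "set (tl I2) \<inter> set (butlast (tl I3)) \<noteq> {}"
    then obtain x where x: "x \<in> set (tl I2)" "x \<in> set (butlast (tl I3))" by blast
    then have xt: "x \<in> set (tl I3)" using set_butlast_sub[of "tl I3"] by blast
    then have "x \<in> set I2 \<inter> set I3" using set_tl_sub[of I2] set_tl_sub[of I3] x by blast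
    then have "x = hd I3" using s23 by blast
    then show False using hd_notin_tl[OF ne(3) d(3)] xt by simp
  qed
  have dc: "distinct c" using d(1) dtl2 dbt3 x1 x2 x3 by (auto simp: c_def)
  have lc: "length c \<ge> 3" using l1 l2 l3 by (simp add: c_def)
  have "set c \<subseteq> V" using setc setL d by auto
  then have "is_cycle V E c" using lc dc wc elast cne by (simp add: is_cycle_def is_path_walk)
  then show ?thesis using setc setL ce peL by (intro exI[of _ c]) auto
qed



lemma supp_glue:
  assumes p1: "is_path V E I1" and p2: "is_path V E I2" and p3: "is_path V E I3"
    and l1: "length I1 \<ge> 2" and l2: "length I2 \<ge> 2" and l3: "length I3 \<ge> 2"
    and e12: "last I1 = hd I2" and e23: "last I2 = hd I3" and e31: "last I3 = hd I1"
    and s12: "set I1 \<inter> set I2 = {hd I2}" and s23: "set I2 \<inter> set I3 = {hd I3}"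
    and s31: "set I3 \<inter> set I1 = {hd I1}"
    and sup: "\<forall>u1\<in>set I1. \<forall>u2\<in>set I2. \<forall>u3\<in>set I3.
         real (Max {gdist E u1 u2, gdist E u2 u3, gdist E u1 u3}) \<ge> k"
  shows "\<exists>c. is_cycle V E c \<and> k_supported V E k c"
proof -
  obtain c where c: "is_cycle V E c" "set I1 \<subseteq> set c" "set I2 \<subseteq> set c" "set I3 \<subseteq> set c"
     "path_edges I1 \<union> path_edges I2 \<union> path_edges I3 = cycle_edges c"
    using glue[OF assms(1-12)] by blast
  have d: "distinct I1" "distinct I2" "distinct I3" using p1 p2 p3 by (auto simp: is_path_def)
  have cards: "card (set I1 \<inter> set I2) = 1" "card (set I2 \<inter> set I3) = 1" "card (set I3 \<inter> set I1) = 1"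
    using s12 s23 s31 by simp_all
  have "k_supported V E k c"
    unfolding k_supported_def
    apply (rule exI[of _ I1], rule exI[of _ I2], rule exI[of _ I3])
    using p1 p2 p3 c cards pe_disj[OF d(1) d(2) cards(1)] pe_disj[OF d(2) d(3) cards(2)]
      pe_disj[OF d(3) d(1) cards(3)] sup by blast
  then show ?thesis using c by blast
qed

lemma walk_snoc: "walk R (xs @ [y]) \<longleftrightarrow> walk R xs \<and> (xs \<noteq> [] \<longrightarrow> R (last xs) y)"
proof (induction xs)
  case (Cons a xs) then show ?case by (cases xs) auto
qed auto

lemma walk_map_upt: "(\<And>i. i < m \<Longrightarrow> R (f i) (f (Suc i))) \<Longrightarrow> walk R (map f [0..<Suc m])"
proof (induction m)
  case (Suc m)
  have "map f [0..<Suc (Suc m)] = map f [0..<Suc m] @ [f (Suc m)]" by simp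
  then show ?case using Suc walk_snoc[of R "map f [0..<Suc m]" "f (Suc m)"] by simp
qed simp

lemma rtranclp_path:
  "R\<^sup>*\<^sup>* x y \<Longrightarrow> \<exists>ps. ps \<noteq> [] \<and> hd ps = x \<and> last ps = y \<and> distinct ps \<and> walk R ps"
proof (induction rule: rtranclp_induct)
  case base then show ?case by (intro exI[of _ "[x]"]) simp
next
  case (step y z)
  then obtain ps where ps: "ps \<noteq> []" "hd ps = x" "last ps = y" "distinct ps" "walk R ps" by blast
  show ?case
  proof (cases "z \<in> set ps")
    case True
    then obtain i where i: "i < length ps" "ps ! i = z" by (meson in_set_conv_nth)
    define ps' where "ps' = take (Suc i) ps"
    have "ps' = take i ps @ [z]" using i by (simp add: ps'_def take_Suc_conv_app_nth)
    moreover have "walk R ps'" using ps(5) walk_prefix[of R ps' "drop (Suc i) ps"] by (simp add: ps'_def)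
    moreover have "hd ps' = x" using ps by (simp add: ps'_def hd_take)
    moreover have "distinct ps'" using ps by (simp add: ps'_def)
    ultimately show ?thesis by (intro exI[of _ ps']) simp
  next
    case False
    have "walk R (ps @ [z])" using walk_snoc[of R ps z] ps step.hyps(2) by simp
    then show ?thesis using ps False by (intro exI[of _ "ps @ [z]"]) simp
  qed
qed

locale G =
  fixes V :: "'a set" and E :: "'a \<Rightarrow> 'a \<Rightarrow> bool"
  assumes sg: "simple_graph V E" and cg: "connected_graph V E"
begin

lemma sym: "E x y \<Longrightarrow> E y x" using sg by (simp add: simple_graph_def)
lemma inV: "E x y \<Longrightarrow> x \<in> V \<and> y \<in> V" using sg by (simp add: simple_graph_def)
lemma finV: "finite V" using sg by (simp add: simple_graph_def)
lemma neV: "V \<noteq> {}" using cg by (simp add: connected_graph_def)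

lemma reach: "x \<in> V \<Longrightarrow> y \<in> V \<Longrightarrow> \<exists>n. (E^^n) x y"
  using cg by (simp add: connected_graph_def rtranclp_power)

lemma gdist_pow: "x \<in> V \<Longrightarrow> y \<in> V \<Longrightarrow> (E^^(gdist E x y)) x y"
  unfolding gdist_def using reach by (metis LeastI)

lemma gdist_le: "(E^^n) x y \<Longrightarrow> gdist E x y \<le> n"
  unfolding gdist_def by (rule Least_le)

lemma pow_sym: "(E^^n) x y \<Longrightarrow> (E^^n) y x"
proof (induction n arbitrary: y)
  case (Suc n)
  then obtain w where "(E^^n) x w" "E w y" by (meson relpowp_Suc_E)
  then show ?case using Suc sym by (meson relpowp_Suc_I2)
qed simp

lemma gdist_sym: "x \<in> V \<Longrightarrow> y \<in> V \<Longrightarrow> gdist E x y = gdist E y x"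
  by (meson antisym gdist_le gdist_pow pow_sym)

lemma tri: "x \<in> V \<Longrightarrow> y \<in> V \<Longrightarrow> z \<in> V \<Longrightarrow> gdist E x z \<le> gdist E x y + gdist E y z"
proof -
  assume a: "x \<in> V" "y \<in> V" "z \<in> V"
  have "(E^^(gdist E x y + gdist E y z)) x z"
    using gdist_pow[OF a(1,2)] gdist_pow[OF a(2,3)] by (auto simp: relpowp_add)
  then show ?thesis by (rule gdist_le)
qed

lemma gdist_self: "gdist E x x = 0"
  using gdist_le[of 0 x x] by simp

lemma gdist_0: "x \<in> V \<Longrightarrow> y \<in> V \<Longrightarrow> gdist E x y = 0 \<Longrightarrow> x = y"
  using gdist_pow[of x y] by simp

lemma gdist_edge: "E x y \<Longrightarrow> gdist E x y \<le> 1"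
proof -
  assume "E x y"
  then have "(E^^1) x y" by auto
  then show ?thesis by (rule gdist_le)
qed

lemma lip: "r \<in> V \<Longrightarrow> u \<in> V \<Longrightarrow> v \<in> V \<Longrightarrow> level E r v \<le> level E r u + gdist E u v"
  unfolding level_def by (rule tri)

lemma descend:
  assumes r: "r \<in> V"
  shows "v \<in> V \<Longrightarrow> level E r v = m \<Longrightarrow> \<exists>p. p 0 = v \<and> (\<forall>i\<le>m. p i \<in> V \<and> level E r (p i) = m - i)
           \<and> (\<forall>i<m. E (p i) (p (Suc i)))"
proof (induction m arbitrary: v)
  case 0 then show ?case by (intro exI[of _ "\<lambda>_. v"]) simp
next
  case (Suc m)
  have "(E^^(Suc m)) r v" using gdist_pow[OF r Suc.prems(1)] Suc.prems(2) by (simp add: level_def)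
  then obtain w where w: "(E^^m) r w" "E w v" by (meson relpowp_Suc_E)
  have wV: "w \<in> V" using inV w(2) by blast
  have "level E r w \<le> m" using gdist_le[OF w(1)] by (simp add: level_def)
  moreover have "level E r v \<le> level E r w + 1" using lip[OF r wV Suc.prems(1)] gdist_edge[OF w(2)] by simp
  ultimately have lw: "level E r w = m" using Suc.prems(2) by simp
  obtain pw where pw: "pw 0 = w" "\<forall>i\<le>m. pw i \<in> V \<and> level E r (pw i) = m - i" "\<forall>i<m. E (pw i) (pw (Suc i))"
    using Suc.IH[OF wV lw] by blast
  define p where "p = (\<lambda>i. if i = 0 then v else pw (i - 1))"
  have "\<forall>i\<le>Suc m. p i \<in> V \<and> level E r (p i) = Suc m - i"
  proof (intro allI impI)
    fix i assume "i \<le> Suc m"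
    then show "p i \<in> V \<and> level E r (p i) = Suc m - i"
      using Suc.prems pw(2) by (cases i) (auto simp: p_def)
  qed
  moreover have "\<forall>i<Suc m. E (p i) (p (Suc i))"
  proof (intro allI impI)
    fix i assume "i < Suc m"
    then show "E (p i) (p (Suc i))"
      using pw(1,3) sym[OF w(2)] by (cases i) (auto simp: p_def)
  qed
  ultimately show ?case by (intro exI[of _ p]) (simp add: p_def)
qed

lemma pow_seq: "(\<forall>i<m. E (p i) (p (Suc i))) \<Longrightarrow> i \<le> m \<Longrightarrow> (E^^i) (p 0) (p i)"
proof (induction i)
  case (Suc i) then show ?case by (meson Suc_le_lessD less_or_eq_imp_le relpowp_Suc_I)
qed simp

end


context G begin

lemma W_attained: "\<exists>r x y n. r \<in> V \<and> x \<in> V \<and> y \<in> V \<and> level E r x = n \<and> level E r y = n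
   \<and> same_comp E r n x y \<and> gdist E x y = cycle_width V E"
proof -
  have "Max (W_root V E ` V) \<in> W_root V E ` V" using Max_in[of "W_root V E ` V"] finV neV by blast
  then obtain r where r: "r \<in> V" "cycle_width V E = W_root V E r"
    unfolding cycle_width_def by auto
  define S where "S = {gdist E x y | n x y. x \<in> V \<and> y \<in> V
       \<and> level E r x = n \<and> level E r y = n \<and> same_comp E r n x y}"
  have "S \<subseteq> (\<lambda>(x,y). gdist E x y) ` (V \<times> V)" unfolding S_def by auto
  then have fS: "finite S" using finV by (meson finite_SigmaI finite_imageI finite_subset)
  have "gdist E r r \<in> S" unfolding S_def same_comp_def using r(1) by blast
  then have "Max S \<in> S" using fS Max_in by blast
  moreover have "W_root V E r = Max S" by (simp add: W_root_def S_def)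
  ultimately have "cycle_width V E \<in> S" using r by simp
  then have "\<exists>n x y. cycle_width V E = gdist E x y \<and> x \<in> V \<and> y \<in> V
       \<and> level E r x = n \<and> level E r y = n \<and> same_comp E r n x y"
    unfolding S_def mem_Collect_eq .
  then obtain n x y where "cycle_width V E = gdist E x y" "x \<in> V" "y \<in> V" "level E r x = n" "level E r y = n"
     "same_comp E r n x y" by blast
  then show ?thesis using r(1) by metis
qed

lemma main_pos:
  assumes r: "r \<in> V" and xV: "x \<in> V" and yV: "y \<in> V" and lx: "level E r x = n" and ly: "level E r y = n"
    and sc: "same_comp E r n x y" and xy: "x \<noteq> y"
  shows "\<exists>c. is_cycle V E c \<and> k_supported V E (real (gdist E x y) / 3) c"
proof -
  obtain p where p: "p 0 = x" "\<forall>i\<le>n. p i \<in> V \<and> level E r (p i) = n - i" "\<forall>i<n. E (p i) (p (Suc i))"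
    using descend[OF r xV lx] by blast
  obtain q where q: "q 0 = y" "\<forall>i\<le>n. q i \<in> V \<and> level E r (q i) = n - i" "\<forall>i<n. E (q i) (q (Suc i))"
    using descend[OF r yV ly] by blast
  have pn: "p n = r"
  proof -
    have "p n \<in> V" "gdist E r (p n) = 0" using p(2) by (auto simp: level_def)
    then show ?thesis using gdist_0[OF r, of "p n"] by simp
  qed
  have qn: "q n = r"
  proof -
    have "q n \<in> V" "gdist E r (q n) = 0" using q(2) by (auto simp: level_def)
    then show ?thesis using gdist_0[OF r, of "q n"] by simp
  qed
  define k where "k = (LEAST i. p i = q i)"
  have pk: "p k = q k" unfolding k_def using pn qn LeastI[of "\<lambda>i. p i = q i" n] by simp
  have kn: "k \<le> n" unfolding k_def using pn qn Least_le[of "\<lambda>i. p i = q i" n] by simp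
  have k0: "k \<noteq> 0"
  proof
    assume "k = 0"
    then have "p 0 = q 0" using pk by simp
    then show False using p(1) q(1) xy by simp
  qed
  have lp: "level E r (p i) = n - i" if "i \<le> n" for i using p(2) that by blast
  have lq: "level E r (q i) = n - i" if "i \<le> n" for i using q(2) that by blast
  have pq_eq: "i = j" if "i \<le> n" "j \<le> n" "p i = q j" for i j
  proof -
    have "n - i = n - j" using lp[OF that(1)] lq[OF that(2)] that(3) by simp
    then show ?thesis using that(1,2) by linarith
  qed
  have pp_eq: "i = j" if "i \<le> n" "j \<le> n" "p i = p j" for i j
  proof -
    have "n - i = n - j" using lp[OF that(1)] lp[OF that(2)] that(3) by simp
    then show ?thesis using that(1,2) by linarith
  qed
  have qq_eq: "i = j" if "i \<le> n" "j \<le> n" "q i = q j" for i j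
  proof -
    have "n - i = n - j" using lq[OF that(1)] lq[OF that(2)] that(3) by simp
    then show ?thesis using that(1,2) by linarith
  qed
  have cross: "i = k" if "i \<le> k" "j \<le> k" "p i = q j" for i j
  proof -
    have ij: "i = j" using pq_eq[of i j] that kn by simp
    have "p i = q i" using that(3) ij by simp
    then have "\<not> i < k" unfolding k_def using not_less_Least[of i "\<lambda>i. p i = q i"] by blast
    then show ?thesis using that by simp
  qed
  obtain Q where Q: "Q \<noteq> []" "hd Q = x" "last Q = y" "distinct Q" "walk (R_edge E r n) Q"
    using rtranclp_path[of "R_edge E r n" x y] sc by (auto simp: same_comp_def)
  have Rinv: "v \<in> V \<and> n \<le> level E r v" if "R_edge E r n u v" for u v
  proof -
    have e: "E u v" and m: "max (level E r u) (level E r v) > n" using that by (auto simp: R_edge_def)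
    have uV: "u \<in> V" and vV: "v \<in> V" using inV[OF e] by auto
    have "level E r u \<le> level E r v + 1" using lip[OF r vV uV] gdist_edge[OF sym[OF e]] by simp
    then show ?thesis using m vV by auto
  qed
  have Qinv: "z \<in> V \<and> n \<le> level E r z" if "z \<in> set Q" for z
    using walk_inv[OF Q(5) Q(1), of "\<lambda>z. z \<in> V \<and> n \<le> level E r z" z] Q(2) xV lx Rinv that by blast
  have wQ: "walk E Q" using walk_mono[OF Q(5)] by (auto simp: R_edge_def)
  have pQ: "is_path V E Q" using Q wQ Qinv by (auto simp: is_path_walk)
  have lQ: "length Q \<ge> 2"
  proof (rule ccontr)
    assume "\<not> length Q \<ge> 2"
    then have "length Q = 1" using Q(1) by (cases Q) (auto simp: Suc_le_eq)
    then obtain z where "Q = [z]" by (metis One_nat_def length_0_conv length_Suc_conv)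
    then show False using Q(2,3) xy by simp
  qed
  define A where "A = map p [0..<Suc k]"
  define D where "D = map q [0..<Suc k]"
  have setA: "set A = p ` {0..k}" unfolding A_def by (simp only: set_map set_upt atLeastLessThanSuc_atLeastAtMost)
  have setD: "set D = q ` {0..k}" unfolding D_def by (simp only: set_map set_upt atLeastLessThanSuc_atLeastAtMost)
  have pA: "is_path V E A"
  proof -
    have "inj_on p {0..<Suc k}" using pp_eq kn by (intro inj_onI) auto
    then have "distinct A" by (simp add: A_def distinct_map del: upt_Suc)
    moreover have "walk E A" unfolding A_def using p(3) kn by (intro walk_map_upt) auto
    moreover have "set A \<subseteq> V" using setA p(2) kn by auto
    moreover have "A \<noteq> []" by (simp add: A_def del: upt_Suc)
    ultimately show ?thesis by (simp add: is_path_walk)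
  qed
  have pD: "is_path V E D"
  proof -
    have "inj_on q {0..<Suc k}" using qq_eq kn by (intro inj_onI) auto
    then have "distinct D" by (simp add: D_def distinct_map del: upt_Suc)
    moreover have "walk E D" unfolding D_def using q(3) kn by (intro walk_map_upt) auto
    moreover have "set D \<subseteq> V" using setD q(2) kn by auto
    moreover have "D \<noteq> []" by (simp add: D_def del: upt_Suc)
    ultimately show ?thesis by (simp add: is_path_walk)
  qed
  have pA': "is_path V E (rev A)" using pA walk_rev[of E A] sym by (simp add: is_path_walk)
  have lenA: "length (rev A) \<ge> 2" "length D \<ge> 2" using k0 by (auto simp: A_def D_def)
  have u1: "[0..<Suc k] = 0 # [1..<Suc k]" by (simp add: upt_conv_Cons del: upt_Suc)
  have u2: "[0..<Suc k] = [0..<k] @ [k]" by simp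
  have hdA: "hd A = x" "last A = p k" using p(1) unfolding A_def by (subst u1, simp) (subst u2, simp)
  have hdD: "hd D = y" "last D = q k" using q(1) unfolding D_def by (subst u1, simp) (subst u2, simp)
  have s12: "set Q \<inter> set D = {hd D}"
  proof
    show "set Q \<inter> set D \<subseteq> {hd D}"
    proof
      fix z assume z: "z \<in> set Q \<inter> set D"
      then obtain j where j: "j \<le> k" "z = q j" using setD by auto
      have "n \<le> n - j" using Qinv[of z] z j q(2) kn by auto
      then have "j = 0" using j kn k0 by linarith
      then show "z \<in> {hd D}" using j q(1) hdD by simp
    qed
    have "D \<noteq> []" using pD by (simp add: is_path_def)
    then show "{hd D} \<subseteq> set Q \<inter> set D" using hdD Q(3) last_in_set[OF Q(1)] hd_in_set[of D] by auto
  qed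
  have s31: "set (rev A) \<inter> set Q = {hd Q}"
  proof
    show "set (rev A) \<inter> set Q \<subseteq> {hd Q}"
    proof
      fix z assume z: "z \<in> set (rev A) \<inter> set Q"
      then obtain j where j: "j \<le> k" "z = p j" using setA by auto
      have "n \<le> n - j" using Qinv[of z] z j p(2) kn by auto
      then have "j = 0" using j kn k0 by linarith
      then show "z \<in> {hd Q}" using j p(1) Q(2) by simp
    qed
    have "A \<noteq> []" using pA by (simp add: is_path_def)
    then show "{hd Q} \<subseteq> set (rev A) \<inter> set Q" using hdA Q(2) hd_in_set[OF Q(1)] hd_in_set[of A] by auto
  qed
  have s23: "set D \<inter> set (rev A) = {hd (rev A)}"
  proof
    show "set D \<inter> set (rev A) \<subseteq> {hd (rev A)}"
    proof
      fix z assume z: "z \<in> set D \<inter> set (rev A)"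
      then obtain i j where ij: "i \<le> k" "j \<le> k" "z = p i" "z = q j" using setA setD by auto
      then have "i = k" using cross by metis
      then show "z \<in> {hd (rev A)}" using ij hdA pA by (simp add: hd_rev)
    qed
    have "p k \<in> set A" "q k \<in> set D" using setA setD by auto
    then show "{hd (rev A)} \<subseteq> set D \<inter> set (rev A)" using hdA pk by (simp add: hd_rev)
  qed
  have sup: "\<forall>u1\<in>set Q. \<forall>u2\<in>set D. \<forall>u3\<in>set (rev A).
         real (Max {gdist E u1 u2, gdist E u2 u3, gdist E u1 u3}) \<ge> real (gdist E x y) / 3"
  proof (intro ballI)
    fix u1 u2 u3 assume u1: "u1 \<in> set Q" and u2: "u2 \<in> set D" and u3: "u3 \<in> set (rev A)"
    obtain j where j: "j \<le> k" "u2 = q j" using u2 setD by auto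
    obtain i where i: "i \<le> k" "u3 = p i" using u3 setA by auto
    have V1: "u1 \<in> V" and l1: "n \<le> level E r u1" using Qinv u1 by auto
    have V2: "u2 \<in> V" and l2: "level E r u2 = n - j" using q(2) j kn by auto
    have V3: "u3 \<in> V" and l3: "level E r u3 = n - i" using p(2) i kn by auto
    have "gdist E x u3 \<le> i" using gdist_le[OF pow_seq[OF p(3), of i]] i kn p(1) by simp
    moreover have "gdist E y u2 \<le> j" using gdist_le[OF pow_seq[OF q(3), of j]] j kn q(1) by simp
    moreover have "gdist E x y \<le> gdist E x u3 + gdist E u3 u2 + gdist E u2 y"
      using tri[OF xV V3 yV] tri[OF V3 V2 yV] by simp
    moreover have "gdist E u2 y = gdist E y u2" using gdist_sym V2 yV by simp
    moreover have "gdist E u3 u2 = gdist E u2 u3" using gdist_sym V2 V3 by simp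
    moreover have "i \<le> gdist E u1 u3" using lip[OF r V3 V1] l1 l3 gdist_sym[OF V1 V3] i kn by simp
    moreover have "j \<le> gdist E u1 u2" using lip[OF r V2 V1] l1 l2 gdist_sym[OF V1 V2] j kn by simp
    ultimately have "gdist E x y \<le> gdist E u1 u2 + gdist E u2 u3 + gdist E u1 u3" by linarith
    moreover have "gdist E u1 u2 \<le> Max {gdist E u1 u2, gdist E u2 u3, gdist E u1 u3}"
      "gdist E u2 u3 \<le> Max {gdist E u1 u2, gdist E u2 u3, gdist E u1 u3}"
      "gdist E u1 u3 \<le> Max {gdist E u1 u2, gdist E u2 u3, gdist E u1 u3}" by simp_all
    ultimately have "gdist E x y \<le> 3 * Max {gdist E u1 u2, gdist E u2 u3, gdist E u1 u3}" by linarith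
    then show "real (Max {gdist E u1 u2, gdist E u2 u3, gdist E u1 u3}) \<ge> real (gdist E x y) / 3"
      by linarith
  qed
  show ?thesis
  proof (rule supp_glue[OF pQ pD pA' lQ lenA(2) lenA(1) _ _ _ s12 s23 s31 sup])
    show "last Q = hd D" using Q hdD by simp
    show "last D = hd (rev A)" using hdD hdA pk pA by (simp add: hd_rev)
    show "last (rev A) = hd Q" using hdA Q by (simp add: last_rev)
  qed
qed

end


lemma len3: "length xs \<ge> 3 \<Longrightarrow> \<exists>a b cs. xs = a#b#cs \<and> cs \<noteq> []"
proof (cases xs)
  case (Cons a ys)
  assume l: "length xs \<ge> 3"
  show ?thesis
  proof (cases ys)
    case (Cons b zs)
    then show ?thesis using l \<open>xs = a # ys\<close> by auto
  qed (use l Cons in simp)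
qed simp

lemma zero_case:
  assumes c: "is_cycle V E c" and sym: "\<And>x y. E x y \<Longrightarrow> E y x"
  shows "\<exists>c. is_cycle V E c \<and> k_supported V E 0 c"
proof -
  obtain a b cs where abc: "c = a#b#cs" "cs \<noteq> []" using len3[of c] c unfolding is_cycle_def by blast
  have pc: "distinct c" "set c \<subseteq> V" "walk E c" "E (last c) (hd c)"
    using c by (auto simp: is_cycle_def is_path_walk)
  have lc: "last c = last cs" using abc by simp
  have lcs: "last cs \<in> set cs" using abc(2) by simp
  have p1: "is_path V E [a,b]" using pc abc by (simp add: is_path_walk)
  have p2: "is_path V E (b#cs)" using pc abc by (simp add: is_path_walk)
  have p3: "is_path V E [last cs, a]" using pc abc lcs lc by (auto simp: is_path_walk)
  have l2: "length (b#cs) \<ge> 2" using abc(2) by (cases cs) auto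
  show ?thesis
  proof (rule supp_glue[OF p1 p2 p3])
    show "set [a, b] \<inter> set (b # cs) = {hd (b # cs)}" using pc abc by auto
    show "set (b # cs) \<inter> set [last cs, a] = {hd [last cs, a]}" using pc abc lcs by auto
    show "set [last cs, a] \<inter> set [a, b] = {hd [a, b]}" using pc abc lcs by auto
  qed (use l2 in auto)
qed

theorem mainTheorem3:
  fixes V :: "'a set" and E :: "'a \<Rightarrow> 'a \<Rightarrow> bool"
  assumes "simple_graph V E" and "connected_graph V E" and "\<not> is_tree V E"
  shows "\<exists>c. is_cycle V E c \<and> k_supported V E (real (cycle_width V E) / 3) c"
proof -
  interpret G V E using assms(1,2) by unfold_locales
  obtain c0 where c0: "is_cycle V E c0" using assms(2,3) by (auto simp: is_tree_def)
  obtain r x y n where h: "r \<in> V" "x \<in> V" "y \<in> V" "level E r x = n" "level E r y = n"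
    "same_comp E r n x y" "gdist E x y = cycle_width V E"
    using W_attained by blast
  show ?thesis
  proof (cases "x = y")
    case True
    then have "cycle_width V E = 0" using h(7) gdist_self by simp
    then show ?thesis using zero_case[OF c0 sym] by simp
  next
    case False
    show ?thesis using main_pos[OF h(1-6) False] h(7) by simp
  qed
qed

end
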